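(* Let $k$ be a commutative ring and $A$ a unital involutive associative $k$-algebra. There is an isomorphism \[HO_0(A)\cong \frac{A}{(a_0a_1a_2-a_2\overline{a_1}a_0)},\] where $(a_0a_1a_2-a_2\overline{a_1}a_0)$ denotes the two-sided ideal of $A$ generated by all elements $a_0a_1a_2-a_2\overline{a_1}a_0$ with $a_0,a_1,a_2\in A$. In particular, $HO_0(A)$ has a ring structure induced from the ring structure of $A$.
   Context: An involutive $k$-algebra is a unital associative $k$-algebra with a $k$-linear map $a\mapsto\overline{a}$ with $\overline{\overline{a}}=a$, $\overline{ab}=\overline{b}\,\overline{a}$, $\overline 1=1$. Let $C_2=\{1,t\}$. The hyperoctahedral category $\Delta H$: objects $[n]=\{0,\dots,n\}$, $n\ge0$; a morphism $f:[n]\to[m]$ is a map of sets with a total order on each fibre and a $C_2$-label on each element of $[n]$; composition $g\circ f$ has fibre over $i$ equal to the concatenation, in the order of $g^{-1}(i)$, of the fibres $f^{-1}(j)$, each replaced by $f^{-1}(j)^t$ (order reversed, labels multiplied by $t$) when $j$ has label $t$ in $g$; labels multiply. The hyperoctahedral bar construction $\mathsf{H}_A:\Delta H\to\mathbf{Mod}_k$ sends $[n]\mapsto A^{\otimes(n+1)}$ and $f$ to $a_0\otimes\cdots\otimes a_n\mapsto b_0\otimes\cdots\otimes b_m$, $b_i$ being the ordered product over $x\in f^{-1}(i)$ of $a_x$ (label $1$) or $\overline{a_x}$ (label $t$), empty product $1_A$. Hyperoctahedral homology is $HO_n(A)=\mathrm{Tor}_n^{\Delta H}(k^{\star},\mathsf{H}_A)$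 with $k^{\star}$ the constant right $\Delta H$-module at $k$. *)

theory Defs
  imports Main "HOL-Library.Poly_Mapping" "HOL-Library.Set_Algebras"
begin

definition kalgebra :: "('k::comm_ring_1 \<Rightarrow> 'a::ring_1 \<Rightarrow> 'a) \<Rightarrow> bool" where
  "kalgebra smult \<longleftrightarrow>
     (\<forall>c a b. smult c (a + b) = smult c a + smult c b) \<and>
     (\<forall>c d a. smult (c + d) a = smult c a + smult d a) \<and>
     (\<forall>c d a. smult (c * d) a = smult c (smult d a)) \<and>
     (\<forall>a. smult 1 a = a) \<and>
     (\<forall>c a b. smult c (a * b) = smult c a * b) \<and>
     (\<forall>c a b. smult c (a * b) = a * smult c b)"

definition involution :: "('k::comm_ring_1 \<Rightarrow> 'a::ring_1 \<Rightarrow> 'a) \<Rightarrow> ('a \<Rightarrow> 'a) \<Rightarrow> bool" where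
  "involution smult bar \<longleftrightarrow>
     (\<forall>a b. bar (a + b) = bar a + bar b) \<and>
     (\<forall>c a. bar (smult c a) = smult c (bar a)) \<and>
     (\<forall>a. bar (bar a) = a) \<and>
     (\<forall>a b. bar (a * b) = bar b * bar a) \<and>
     bar 1 = 1"

text \<open>A morphism f : [n] \<rightarrow> [m] of \<Delta>H is encoded as a list of m+1 lists: the i-th list enumerates
 the fibre f^{-1}(i) in its total order, each element x paired with its C_2-label
 (True = t, False = 1).\<close>

definition DH_mor :: "nat \<Rightarrow> nat \<Rightarrow> (nat \<times> bool) list list \<Rightarrow> bool" where
  "DH_mor n m f \<longleftrightarrow> length f = Suc m \<and>
     distinct (map fst (concat f)) \<and> set (map fst (concat f)) = {0..n}"

text \<open>Action of H_A(f) on a pure tensor a_0 \<otimes> ... \<otimes> a_n (given as a list of length n+1).\<close>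

definition H_act :: "('a::ring_1 \<Rightarrow> 'a) \<Rightarrow> (nat \<times> bool) list list \<Rightarrow> 'a list \<Rightarrow> 'a list" where
  "H_act bar f as =
     map (\<lambda>L. prod_list (map (\<lambda>(x, t). if t then bar (as ! x) else as ! x) L)) f"

definition fsmult :: "'k::comm_ring_1 \<Rightarrow> ('b \<Rightarrow>\<^sub>0 'k) \<Rightarrow> ('b \<Rightarrow>\<^sub>0 'k)" where
  "fsmult c u = Poly_Mapping.map (\<lambda>v. c * v) u"

inductive_set kspan :: "('b \<Rightarrow>\<^sub>0 'k::comm_ring_1) set \<Rightarrow> ('b \<Rightarrow>\<^sub>0 'k) set"
  for S where
    kspan_zero: "0 \<in> kspan S"
  | kspan_gen: "s \<in> S \<Longrightarrow> s \<in> kspan S"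
  | kspan_add: "x \<in> kspan S \<Longrightarrow> y \<in> kspan S \<Longrightarrow> x + y \<in> kspan S"
  | kspan_smult: "x \<in> kspan S \<Longrightarrow> fsmult c x \<in> kspan S"

inductive_set two_sided_ideal :: "'a::ring_1 set \<Rightarrow> 'a set" for S where
    tsi_zero: "0 \<in> two_sided_ideal S"
  | tsi_gen: "s \<in> S \<Longrightarrow> s \<in> two_sided_ideal S"
  | tsi_add: "x \<in> two_sided_ideal S \<Longrightarrow> y \<in> two_sided_ideal S \<Longrightarrow> x + y \<in> two_sided_ideal S"
  | tsi_mult: "x \<in> two_sided_ideal S \<Longrightarrow> a * x * b \<in> two_sided_ideal S"

definition quot_set :: "'b::plus set \<Rightarrow> 'b set \<Rightarrow> 'b set set" where
  "quot_set M N = (\<lambda>x. x +o N) ` M"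

definition coset_smult :: "('k \<Rightarrow> 'b \<Rightarrow> 'b) \<Rightarrow> 'k \<Rightarrow> 'b::plus set \<Rightarrow> 'b set \<Rightarrow> 'b set" where
  "coset_smult sm c X N = (sm c ` X) + N"

text \<open>The k-module \<Oplus>_n A^{\<otimes>(n+1)} is presented as the free k-module on nonempty lists of
 elements of A modulo the multilinearity relations. HO_0(A) = Tor_0^{\<Delta>H}(k*, H_A)
 = k* \<otimes>_{\<Delta>H} H_A, which (k* being constant) is \<Oplus>_n H_A([n]) modulo the relations
 x \<sim> H_A(f)(x) for all morphisms f; it suffices to impose these on pure tensors.\<close>

definition HO_chains :: "('a list \<Rightarrow>\<^sub>0 'k::comm_ring_1) set" where
  "HO_chains = {u. \<forall>l \<in> Poly_Mapping.keys u. l \<noteq> []}"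

definition multilin_rel :: "('k::comm_ring_1 \<Rightarrow> 'a::ring_1 \<Rightarrow> 'a) \<Rightarrow> ('a list \<Rightarrow>\<^sub>0 'k) set" where
  "multilin_rel smult =
     {Poly_Mapping.single (xs @ (a + b) # ys) 1 - Poly_Mapping.single (xs @ a # ys) 1
        - Poly_Mapping.single (xs @ b # ys) 1 | xs ys a b. True}
   \<union> {Poly_Mapping.single (xs @ smult c a # ys) 1 - fsmult c (Poly_Mapping.single (xs @ a # ys) 1)
        | xs ys a c. True}"

definition functor_rel :: "('a::ring_1 \<Rightarrow> 'a) \<Rightarrow> ('a list \<Rightarrow>\<^sub>0 'k::comm_ring_1) set" where
  "functor_rel bar =
     {Poly_Mapping.single as 1 - Poly_Mapping.single (H_act bar f as) 1
        | n m f as. DH_mor n m f \<and> length as = Suc n}"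

definition HO0_rel :: "('k::comm_ring_1 \<Rightarrow> 'a::ring_1 \<Rightarrow> 'a) \<Rightarrow> ('a \<Rightarrow> 'a) \<Rightarrow> ('a list \<Rightarrow>\<^sub>0 'k) set" where
  "HO0_rel smult bar = kspan (multilin_rel smult \<union> functor_rel bar)"

definition HO0 :: "('k::comm_ring_1 \<Rightarrow> 'a::ring_1 \<Rightarrow> 'a) \<Rightarrow> ('a \<Rightarrow> 'a) \<Rightarrow> ('a list \<Rightarrow>\<^sub>0 'k) set set" where
  "HO0 smult bar = quot_set HO_chains (HO0_rel smult bar)"

definition HO_ideal :: "('a::ring_1 \<Rightarrow> 'a) \<Rightarrow> 'a set" where
  "HO_ideal bar = two_sided_ideal {a0 * a1 * a2 - a2 * bar a1 * a0 | a0 a1 a2. True}"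

end

theory Submission
  imports Defs "HOL-Library.Multiset"
begin


lemma lookupfsm: "Poly_Mapping.lookup (fsmult c u) l = c * Poly_Mapping.lookup u l"
  unfolding fsmult_def by transfer (simp add: when_def)

lemma keys_fsmult: "Poly_Mapping.keys (fsmult c u) \<subseteq> Poly_Mapping.keys u"
  by (auto simp: in_keys_iff lookupfsm)

lemma fsmult_single: "fsmult c (Poly_Mapping.single l 1) = Poly_Mapping.single l c"
  unfolding fsmult_def by simp

lemma fsmult_add: "fsmult c (u+v) = fsmult c u + fsmult c v"
  by (rule poly_mapping_eqI) (simp add: lookupfsm lookup_add algebra_simps)

lemma fsmult_diff: "fsmult c (u-v) = fsmult c u - fsmult c v"
  by (rule poly_mapping_eqI) (simp add: lookupfsm lookup_minus algebra_simps)

lemma fsmult_neg: "fsmult (-1) u = - u"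
  by (rule poly_mapping_eqI) (simp add: lookupfsm lookup_minus)

lemma mono_sum: "(\<Sum>l\<in>Poly_Mapping.keys p. Poly_Mapping.single l (Poly_Mapping.lookup p l)) = p"
  by (rule poly_mapping_eqI) (simp add: lookup_sum lookup_single when_def sum.delta in_keys_iff)

definition subgrp :: "'b::ab_group_add set \<Rightarrow> bool" where
  "subgrp N \<longleftrightarrow> 0 \<in> N \<and> (\<forall>x\<in>N. \<forall>y\<in>N. x+y \<in> N) \<and> (\<forall>x\<in>N. -x \<in> N)"

lemma coset_mem: "(y::'b::ab_group_add) \<in> x +o N \<longleftrightarrow> y - x \<in> N"
  by (auto simp: elt_set_plus_def) (metis add_diff_cancel_left' diff_add_cancel add.commute)

lemma subgrp_diff: "subgrp N \<Longrightarrow> x \<in> N \<Longrightarrow> y \<in> N \<Longrightarrow> x - y \<in> N"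
proof -
  assume s: "subgrp N" and x: "x \<in> N" and y: "y \<in> N"
  have "- y \<in> N" using s y unfolding subgrp_def by blast
  then have "x + - y \<in> N" using s x unfolding subgrp_def by blast
  then show ?thesis by simp
qed

lemma coset_eq: "subgrp N \<Longrightarrow> ((x::'b::ab_group_add) +o N = y +o N) \<longleftrightarrow> x - y \<in> N"
proof
  assume s: "subgrp N" and e: "x +o N = y +o N"
  have "x \<in> x +o N" using s by (simp add: coset_mem subgrp_def)
  then show "x - y \<in> N" using e by (simp add: coset_mem)
next
  assume s: "subgrp N" and d: "x - y \<in> N"
  show "x +o N = y +o N"
  proof (rule set_eqI)
    fix z
    have 1: "z - y = (z - x) + (x - y)" by simp
    have 2: "z - x = (z - y) - (x - y)" by simp
    have 3: "z - x \<in> N \<Longrightarrow> z - y \<in> N" proof -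
      assume a: "z - x \<in> N"
      have "(z - x) + (x - y) \<in> N" using s d a unfolding subgrp_def by blast
      then show ?thesis by (simp only: 1)
    qed
    have 4: "z - y \<in> N \<Longrightarrow> z - x \<in> N" proof -
      assume a: "z - y \<in> N"
      have "(z - y) - (x - y) \<in> N" using subgrp_diff[OF s a d] .
      then show ?thesis by (simp only: 2)
    qed
    show "z \<in> x +o N \<longleftrightarrow> z \<in> y +o N"
      unfolding coset_mem using 3 4 by blast
  qed
qed

lemma subgrp_plus: "subgrp N \<Longrightarrow> N + N = N"
  unfolding subgrp_def set_plus_def by force

lemma coset_add: "subgrp N \<Longrightarrow> ((x::'b::ab_group_add) +o N) + (y +o N) = (x+y) +o N"
  by (simp add: set_plus_rearrange subgrp_plus)

lemma coset_lin:
  assumes s: "subgrp N" and h: "\<And>a b. h (a+b) = h a + h b" and hN: "\<And>n. n\<in>N \<Longrightarrow> h n \<in> N"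
  shows "(h ` ((x::'b::ab_group_add) +o N)) + N = h x +o N"
proof (rule set_eqI)
  fix z
  show "z \<in> (h ` (x +o N)) + N \<longleftrightarrow> z \<in> h x +o N"
  proof
    assume "z \<in> (h ` (x +o N)) + N"
    then obtain n n' where n: "n \<in> N" "n' \<in> N" and z: "z = h (x + n) + n'"
      by (auto simp: set_plus_def elt_set_plus_def)
    have "z - h x = h n + n'" using z h by simp
    then show "z \<in> h x +o N" using s n hN by (simp add: coset_mem subgrp_def)
  next
    assume "z \<in> h x +o N"
    then have d: "z - h x \<in> N" by (simp add: coset_mem)
    have "x + 0 \<in> x +o N" using s by (intro set_plus_intro2) (simp add: subgrp_def)
    then have "h x \<in> h ` (x +o N)" by simp
    then have "h x + (z - h x) \<in> (h ` (x +o N)) + N" using d by (rule set_plus_intro)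
    then show "z \<in> (h ` (x +o N)) + N" by simp
  qed
qed



definition psi :: "('k::comm_ring_1 \<Rightarrow> 'a::ring_1 \<Rightarrow> 'a) \<Rightarrow> ('a list \<Rightarrow>\<^sub>0 'k) \<Rightarrow> 'a" where
  "psi sm u = (\<Sum>l\<in>Poly_Mapping.keys u. sm (Poly_Mapping.lookup u l) (prod_list l))"

lemma prod_list_concat': "prod_list (concat xss) = prod_list (map prod_list xss)"
  by (induction xss) auto

lemma g1: "(c::'b::ab_group_add) = (a - b) - (a - c - b)" by (simp add: algebra_simps)
lemma g2: "(x::'b::ab_group_add) = (x - a - b) + a + b" by (simp add: algebra_simps)
lemma g3: "(a::'b::ab_group_add) - b = (c - b) - (c - a)" by (simp add: algebra_simps)
lemma g4: "((p::'b::ab_group_add) + A) - sB = (p - q) + (A - B) - (s - q) - (sB - s - B)" by (simp add: algebra_simps)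

definition PhiG :: "('k::comm_ring_1 \<Rightarrow> 'a::ring_1 \<Rightarrow> 'a) \<Rightarrow> ('a \<Rightarrow> 'a) \<Rightarrow> ('a list \<Rightarrow>\<^sub>0 'k) set \<Rightarrow> 'a set" where
  "PhiG smult bar X = {a. \<exists>u\<in>X. a - psi smult u \<in> HO_ideal bar}"

lemma g5: "(x::'b::ab_group_add) - y = (x - a) - (y - b) + (a - c - b) + c" by (simp add: algebra_simps)

context
  fixes smult :: "'k::comm_ring_1 \<Rightarrow> 'a::ring_1 \<Rightarrow> 'a" and bar :: "'a \<Rightarrow> 'a"
  assumes kalg: "kalgebra smult" and inv: "involution smult bar"
begin

lemma sm_add: "smult c (a + b) = smult c a + smult c b"
  using kalg unfolding kalgebra_def by blast
lemma sm_addl: "smult (c + d) a = smult c a + smult d a"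
  using kalg unfolding kalgebra_def by blast
lemma sm_mm: "smult (c * d) a = smult c (smult d a)"
  using kalg unfolding kalgebra_def by blast
lemma sm_one: "smult 1 a = a"
  using kalg unfolding kalgebra_def by blast
lemma sm_ml: "smult c (a * b) = smult c a * b"
  using kalg unfolding kalgebra_def by blast
lemma sm_mr: "smult c (a * b) = a * smult c b"
  using kalg unfolding kalgebra_def by blast
lemma bar_one: "bar 1 = 1"
  using inv unfolding involution_def by blast

lemma sm_zero_left: "smult 0 a = 0"
  using sm_addl[of 0 0 a] by simp
lemma sm_zero_right: "smult c 0 = 0"
  using sm_add[of c 0 0] by simp
lemma sm_sum: "finite S \<Longrightarrow> smult c (sum f S) = (\<Sum>x\<in>S. smult c (f x))"
  by (induction S rule: finite_induct) (auto simp: sm_zero_right sm_add)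

abbreviation "I \<equiv> HO_ideal bar"
abbreviation "N \<equiv> HO0_rel smult bar"

lemma I_mult: "x \<in> I \<Longrightarrow> a * x * b \<in> I"
  unfolding HO_ideal_def by (rule tsi_mult)
lemma I_add: "x \<in> I \<Longrightarrow> y \<in> I \<Longrightarrow> x + y \<in> I"
  unfolding HO_ideal_def by (rule tsi_add)
lemma I_zero: "0 \<in> I"
  unfolding HO_ideal_def by (rule tsi_zero)
lemma I_neg: "x \<in> I \<Longrightarrow> - x \<in> I"
  using I_mult[of x "-1" 1] by simp
lemma I_diff: "x \<in> I \<Longrightarrow> y \<in> I \<Longrightarrow> x - y \<in> I"
  using I_add I_neg by (metis diff_conv_add_uminus)
lemma I_lm: "x \<in> I \<Longrightarrow> a * x \<in> I"
  using I_mult[of x a 1] by simp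
lemma I_rm: "x \<in> I \<Longrightarrow> x * b \<in> I"
  using I_mult[of x 1 b] by simp
lemma I_sm: "x \<in> I \<Longrightarrow> smult c x \<in> I"
  using I_lm[of x "smult c 1"] sm_ml[of c 1 x] by simp
lemma I_gen: "a0 * a1 * a2 - a2 * bar a1 * a0 \<in> I"
  unfolding HO_ideal_def by (rule tsi_gen) blast
lemma I_comm: "x * y - y * x \<in> I"
  using I_gen[of x 1 y] by (simp add: bar_one)
lemma I_bar: "a - bar a \<in> I"
  using I_gen[of 1 a 1] by simp
lemma I_subgrp: "subgrp I"
  unfolding subgrp_def using I_zero I_add I_neg by blast

lemma I_cong_mult: "a - b \<in> I \<Longrightarrow> c - d \<in> I \<Longrightarrow> a * c - b * d \<in> I"
proof -
  assume h: "a - b \<in> I" "c - d \<in> I"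
  have "a * c - b * d = (a - b) * c + b * (c - d)" by (simp add: algebra_simps)
  then show ?thesis using h I_lm I_rm I_add by metis
qed

lemma I_perm: "mset xs = mset ys \<Longrightarrow> prod_list xs - prod_list ys \<in> I"
proof (induction xs arbitrary: ys)
  case Nil
  then have "ys = []" by simp
  then show ?case by (simp add: I_zero)
next
  case (Cons x xs)
  have "x \<in> set ys" using Cons.prems by (metis list.set_intros(1) set_mset_mset)
  then obtain ys1 ys2 where ys: "ys = ys1 @ x # ys2" by (meson split_list)
  have "mset xs = mset (ys1 @ ys2)" using Cons.prems ys by simp
  then have ih: "prod_list xs - prod_list (ys1 @ ys2) \<in> I" using Cons.IH by blast
  let ?P1 = "prod_list ys1" and ?P2 = "prod_list ys2"
  have a: "x * prod_list xs - x * (?P1 * ?P2) \<in> I"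
    using I_cong_mult[of x x] ih I_zero by simp
  have b: "(x * ?P1 - ?P1 * x) * ?P2 \<in> I" using I_comm I_rm by blast
  have "prod_list (x # xs) - prod_list ys = (x * prod_list xs - x * (?P1 * ?P2)) + (x * ?P1 - ?P1 * x) * ?P2"
    using ys by (simp add: algebra_simps)
  then show ?case using a b I_add by metis
qed

lemma I_prod_map_cong: "(\<And>p. p \<in> set L \<Longrightarrow> g p - g' p \<in> I) \<Longrightarrow>
   prod_list (map g L) - prod_list (map g' L) \<in> I"
  by (induction L) (auto simp: I_zero intro: I_cong_mult)

lemma I_functor:
  assumes f: "DH_mor n m f" and l: "length as = Suc n"
  shows "prod_list as - prod_list (H_act bar f as) \<in> I"
proof -
  define g where "g = (\<lambda>(x::nat, t). if t then bar (as ! x) else as ! x)"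
  define cf where "cf = concat f"
  have e1: "prod_list (H_act bar f as) = prod_list (map g cf)"
    unfolding H_act_def g_def cf_def by (simp add: prod_list_concat' map_concat o_def)
  have e2: "prod_list (map g cf) - prod_list (map (\<lambda>p. as ! fst p) cf) \<in> I"
  proof (rule I_prod_map_cong)
    fix p assume "p \<in> set cf"
    obtain x t where p: "p = (x, t)" by force
    show "g p - as ! fst p \<in> I"
      using I_neg[OF I_bar[of "as ! x"]] I_zero unfolding g_def p by auto
  qed
  have d: "distinct (map fst cf)" "set (map fst cf) = {0..n}" using f unfolding DH_mor_def cf_def by auto
  have "set [0..<Suc n] = {0..n}" by (simp only: set_upt atLeastLessThanSuc_atLeastAtMost)
  then have "mset (map fst cf) = mset [0..<Suc n]"
    using d set_eq_iff_mset_eq_distinct[of "map fst cf" "[0..<Suc n]"] by simp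
  then have "mset (map (nth as) (map fst cf)) = mset (map (nth as) [0..<Suc n])"
    by (simp only: mset_map)
  also have "map (nth as) [0..<Suc n] = as" using l map_nth[of as] by simp
  finally have m: "mset as = mset (map (nth as) (map fst cf))" by (rule sym)
  have mm: "map (nth as) (map fst cf) = map (\<lambda>p. as ! fst p) cf" by simp
  have e3: "prod_list as - prod_list (map (\<lambda>p. as ! fst p) cf) \<in> I"
    using I_perm[OF m] unfolding mm .
  have "prod_list as - prod_list (H_act bar f as) =
     (prod_list as - prod_list (map (\<lambda>p. as ! fst p) cf)) - (prod_list (map g cf) - prod_list (map (\<lambda>p. as ! fst p) cf))"
    unfolding e1 by (simp add: algebra_simps)
  then show ?thesis using I_diff[OF e3 e2] by simp
qed

abbreviation sg :: "'a list \<Rightarrow> 'k \<Rightarrow> ('a list \<Rightarrow>\<^sub>0 'k)" where "sg \<equiv> Poly_Mapping.single"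

lemma psi_superset:
  assumes "finite S" "Poly_Mapping.keys u \<subseteq> S"
  shows "psi smult u = (\<Sum>l\<in>S. smult (Poly_Mapping.lookup u l) (prod_list l))"
  unfolding psi_def
  by (rule sum.mono_neutral_right[symmetric])
     (use assms in \<open>auto simp: in_keys_iff sm_zero_left\<close>)

lemma psi_add: "psi smult (u + v) = psi smult u + psi smult v"
proof -
  let ?S = "Poly_Mapping.keys u \<union> Poly_Mapping.keys v"
  have "psi smult (u + v) = (\<Sum>l\<in>?S. smult (Poly_Mapping.lookup (u+v) l) (prod_list l))"
    by (rule psi_superset) (auto dest: keys_add[THEN subsetD])
  also have "\<dots> = (\<Sum>l\<in>?S. smult (Poly_Mapping.lookup u l) (prod_list l))
     + (\<Sum>l\<in>?S. smult (Poly_Mapping.lookup v l) (prod_list l))"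
    by (simp add: lookup_add sm_addl sum.distrib)
  also have "\<dots> = psi smult u + psi smult v"
    using psi_superset[of ?S u] psi_superset[of ?S v] by simp
  finally show ?thesis .
qed

lemma psi_zero: "psi smult 0 = 0"
  unfolding psi_def by simp

lemma psi_diff: "psi smult (u - v) = psi smult u - psi smult v"
  using psi_add[of "u - v" v] by (simp add: algebra_simps)

lemma psi_fsmult: "psi smult (fsmult c u) = smult c (psi smult u)"
proof -
  have "psi smult (fsmult c u) = (\<Sum>l\<in>Poly_Mapping.keys u. smult (Poly_Mapping.lookup (fsmult c u) l) (prod_list l))"
    by (rule psi_superset) (auto simp: keys_fsmult)
  also have "\<dots> = smult c (psi smult u)"
    unfolding psi_def by (simp add: lookupfsm sm_mm sm_sum)
  finally show ?thesis .
qed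

lemma psi_single: "psi smult (sg l c) = smult c (prod_list l)"
proof -
  have "psi smult (sg l c) = (\<Sum>l'\<in>{l}. smult (Poly_Mapping.lookup (sg l c) l') (prod_list l'))"
    by (rule psi_superset) auto
  then show ?thesis by simp
qed

lemma N_zero: "0 \<in> N" unfolding HO0_rel_def by (rule kspan_zero)
lemma N_add: "x \<in> N \<Longrightarrow> y \<in> N \<Longrightarrow> x + y \<in> N" unfolding HO0_rel_def by (rule kspan_add)
lemma N_fsmult: "x \<in> N \<Longrightarrow> fsmult c x \<in> N" unfolding HO0_rel_def by (rule kspan_smult)
lemma N_neg: "x \<in> N \<Longrightarrow> - x \<in> N" using N_fsmult[of x "-1"] by (simp add: fsmult_neg)
lemma N_diff: "x \<in> N \<Longrightarrow> y \<in> N \<Longrightarrow> x - y \<in> N" using N_add N_neg by (metis diff_conv_add_uminus)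
lemma N_subgrp: "subgrp N" unfolding subgrp_def using N_zero N_add N_neg by blast

lemma N_lin_add: "sg [a+b] 1 - sg [a] 1 - sg [b] 1 \<in> N"
proof -
  have "sg ([] @ (a+b) # []) 1 - sg ([] @ a # []) 1 - sg ([] @ b # []) 1 \<in> multilin_rel smult"
    unfolding multilin_rel_def by blast
  then show ?thesis unfolding HO0_rel_def by (auto intro: kspan_gen)
qed

lemma N_lin_sm: "sg [smult c a] 1 - sg [a] c \<in> N"
proof -
  have "sg ([] @ smult c a # []) 1 - fsmult c (sg ([] @ a # []) 1) \<in> multilin_rel smult"
    unfolding multilin_rel_def by blast
  then show ?thesis unfolding HO0_rel_def by (auto intro: kspan_gen simp: fsmult_single)
qed

lemma N_single0: "sg [0] 1 \<in> N"
  using N_neg[OF N_lin_add[of 0 0]] by simp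

lemma N_diff_single: "sg [p] 1 - sg [q] 1 \<in> N \<Longrightarrow> sg [p - q] 1 \<in> N"
proof -
  assume h: "sg [p] 1 - sg [q] 1 \<in> N"
  have X: "sg [p] 1 - sg [p-q] 1 - sg [q] 1 \<in> N" using N_lin_add[of "p - q" q] by simp
  have E: "sg [p - q] 1 = (sg [p] 1 - sg [q] 1) - (sg [p] 1 - sg [p-q] 1 - sg [q] 1)" by (rule g1)
  show ?thesis by (subst E) (rule N_diff[OF h X])
qed

lemma N_funct: "DH_mor n m f \<Longrightarrow> length as = Suc n \<Longrightarrow> sg as 1 - sg (H_act bar f as) 1 \<in> N"
  unfolding HO0_rel_def functor_rel_def by (rule kspan_gen) blast

lemma N_prod:
  assumes "l \<noteq> []" shows "sg l 1 - sg [prod_list l] 1 \<in> N"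
proof -
  define f where "f = [map (\<lambda>i. (i, False)) [0..<length l]]"
  have "set [0..<length l] = {0..length l - 1}" using assms
    apply (cases l) apply simp
    apply (simp only: set_upt length_Cons diff_Suc_1 atLeastLessThanSuc_atLeastAtMost) done
  then have "DH_mor (length l - 1) 0 f" unfolding DH_mor_def f_def by (simp add: o_def)
  moreover have "length l = Suc (length l - 1)" using assms by simp
  ultimately have "sg l 1 - sg (H_act bar f l) 1 \<in> N" by (rule N_funct)
  moreover have "H_act bar f l = [prod_list l]"
    unfolding H_act_def f_def by (simp add: o_def map_nth)
  ultimately show ?thesis by simp
qed

lemma N_5: "sg [x*a0*a1*a2*y] 1 - sg [x*a2*bar a1*a0*y] 1 \<in> N"
proof -
  let ?as = "[x, a0, a1, a2, y]"
  have d1: "DH_mor 4 0 [[(0,False),(1,False),(2,False),(3,False),(4,False)]]"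
    unfolding DH_mor_def by (auto simp: atLeastAtMost_iff)
  have d2: "DH_mor 4 0 [[(0,False),(3,False),(2,True),(1,False),(4,False)]]"
    unfolding DH_mor_def by (auto simp: atLeastAtMost_iff)
  have r1: "sg ?as 1 - sg [x*a0*a1*a2*y] 1 \<in> N"
    using N_funct[OF d1, of ?as] by (simp add: H_act_def mult.assoc)
  have r2: "sg ?as 1 - sg [x*a2*bar a1*a0*y] 1 \<in> N"
    using N_funct[OF d2, of ?as] by (simp add: H_act_def mult.assoc)
  have "sg [x*a0*a1*a2*y] 1 - sg [x*a2*bar a1*a0*y] 1 = (sg ?as 1 - sg [x*a2*bar a1*a0*y] 1) - (sg ?as 1 - sg [x*a0*a1*a2*y] 1)"
    by (rule g3)
  then show ?thesis using N_diff[OF r2 r1] by simp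
qed

lemma N_I: "r \<in> I \<Longrightarrow> sg [x*r*y] 1 \<in> N"
  unfolding HO_ideal_def
proof (induction r arbitrary: x y rule: two_sided_ideal.induct)
  case tsi_zero
  then show ?case using N_single0 by simp
next
  case (tsi_gen s)
  then obtain a0 a1 a2 where s: "s = a0 * a1 * a2 - a2 * bar a1 * a0" by blast
  have "x * s * y = x*a0*a1*a2*y - x*a2*bar a1*a0*y" unfolding s by (simp add: algebra_simps)
  then show ?case using N_diff_single[OF N_5] by simp
next
  case (tsi_add r1 r2)
  have a: "sg [x*r1*y + x*r2*y] 1 - sg [x*r1*y] 1 - sg [x*r2*y] 1 \<in> N" by (rule N_lin_add)
  have er: "x*(r1+r2)*y = x*r1*y + x*r2*y" by (simp add: algebra_simps)
  have e: "sg [x*(r1+r2)*y] 1 = (sg [x*r1*y + x*r2*y] 1 - sg [x*r1*y] 1 - sg [x*r2*y] 1) + sg [x*r1*y] 1 + sg [x*r2*y] 1"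
    unfolding er by (rule g2)
  show ?case unfolding e using a tsi_add.IH N_add by blast
next
  case (tsi_mult r a b)
  have "x * (a * r * b) * y = (x*a) * r * (b*y)" by (simp add: mult.assoc)
  then show ?case using tsi_mult.IH by simp
qed

lemma N_I1: "r \<in> I \<Longrightarrow> sg [r] 1 \<in> N"
  using N_I[of r 1 1] by simp

lemma N_sum:
  assumes "finite S" "\<forall>l\<in>S. l \<noteq> []"
  shows "(\<Sum>l\<in>S. sg l (g l)) - sg [\<Sum>l\<in>S. smult (g l) (prod_list l)] 1 \<in> N"
  using assms
proof (induction S rule: finite_induct)
  case empty
  then show ?case using N_neg[OF N_single0] by simp
next
  case (insert l S)
  let ?A = "\<Sum>l\<in>S. sg l (g l)" and ?B = "\<Sum>l\<in>S. smult (g l) (prod_list l)"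
  let ?s = "smult (g l) (prod_list l)" and ?p = "prod_list l"
  have ih: "?A - sg [?B] 1 \<in> N" using insert by simp
  have t1: "sg l (g l) - sg [?p] (g l) \<in> N"
    using N_fsmult[OF N_prod[of l], of "g l"] insert.prems by (simp add: fsmult_diff fsmult_single)
  have t2: "sg [?s] 1 - sg [?p] (g l) \<in> N" by (rule N_lin_sm)
  have t3: "sg [?s + ?B] 1 - sg [?s] 1 - sg [?B] 1 \<in> N" by (rule N_lin_add)
  have eq: "(sg l (g l) + ?A) - sg [?s + ?B] 1 =
     (sg l (g l) - sg [?p] (g l)) + (?A - sg [?B] 1) - (sg [?s] 1 - sg [?p] (g l)) - (sg [?s + ?B] 1 - sg [?s] 1 - sg [?B] 1)"
    by (rule g4)
  have "(sg l (g l) + ?A) - sg [?s + ?B] 1 \<in> N"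
    unfolding eq by (rule N_diff[OF N_diff[OF N_add[OF t1 ih] t2] t3])
  then show ?case using insert by simp
qed

lemma N_psi: "u \<in> HO_chains \<Longrightarrow> u - sg [psi smult u] 1 \<in> N"
  using N_sum[of "Poly_Mapping.keys u" "Poly_Mapping.lookup u"]
  unfolding HO_chains_def psi_def by (simp add: mono_sum)

lemma psi_N: "n \<in> N \<Longrightarrow> psi smult n \<in> I"
  unfolding HO0_rel_def
proof (induction n rule: kspan.induct)
  case kspan_zero
  then show ?case by (simp add: psi_zero I_zero)
next
  case (kspan_gen s)
  then show ?case
  proof
    assume "s \<in> multilin_rel smult"
    then show ?thesis unfolding multilin_rel_def
    proof
      assume "s \<in> {sg (xs @ (a + b) # ys) 1 - sg (xs @ a # ys) 1 - sg (xs @ b # ys) 1 |xs ys a b. True}"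
      then obtain xs ys a b where s: "s = sg (xs @ (a + b) # ys) 1 - sg (xs @ a # ys) 1 - sg (xs @ b # ys) 1" by blast
      have "psi smult s = prod_list (xs @ (a+b) # ys) - prod_list (xs @ a # ys) - prod_list (xs @ b # ys)"
        unfolding s by (simp only: psi_diff psi_single sm_one)
      also have "\<dots> = 0" by (simp add: algebra_simps)
      finally have "psi smult s = 0" .
      then show ?thesis by (simp add: I_zero)
    next
      assume "s \<in> {sg (xs @ smult c a # ys) 1 - fsmult c (sg (xs @ a # ys) 1) |xs ys a c. True}"
      then obtain xs ys a c where s: "s = sg (xs @ smult c a # ys) 1 - fsmult c (sg (xs @ a # ys) 1)" by blast
      have "smult c (prod_list xs * (a * prod_list ys)) = prod_list xs * (smult c a * prod_list ys)"
        by (subst sm_mr) (subst sm_ml, rule refl)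
      then have "psi smult s = 0" unfolding s
        by (simp add: psi_diff psi_single psi_fsmult sm_one)
      then show ?thesis by (simp add: I_zero)
    qed
  next
    assume "s \<in> functor_rel bar"
    then obtain n m f as where s: "s = sg as 1 - sg (H_act bar f as) 1" "DH_mor n m f" "length as = Suc n"
      unfolding functor_rel_def by blast
    show ?thesis unfolding s(1) using I_functor[OF s(2,3)]
      by (simp add: psi_diff psi_single sm_one)
  qed
next
  case (kspan_add x y)
  then show ?case by (simp add: psi_add I_add)
next
  case (kspan_smult x c)
  then show ?case by (simp add: psi_fsmult I_sm)
qed



lemma Phi_coset: "PhiG smult bar (x +o N) = psi smult x +o I"
proof (rule set_eqI)
  fix a
  show "a \<in> PhiG smult bar (x +o N) \<longleftrightarrow> a \<in> psi smult x +o I"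
  proof
    assume "a \<in> PhiG smult bar (x +o N)"
    then obtain u where u: "u \<in> x +o N" "a - psi smult u \<in> I" unfolding PhiG_def by blast
    have "u - x \<in> N" using u(1) coset_mem by blast
    then have "psi smult (u - x) \<in> I" by (rule psi_N)
    then have "(a - psi smult u) + psi smult (u - x) \<in> I" using u(2) I_add by blast
    then show "a \<in> psi smult x +o I" by (simp add: coset_mem psi_diff)
  next
    assume "a \<in> psi smult x +o I"
    then have "a - psi smult x \<in> I" by (simp add: coset_mem)
    moreover have "x \<in> x +o N" using N_zero by (simp add: coset_mem)
    ultimately show "a \<in> PhiG smult bar (x +o N)" unfolding PhiG_def by blast
  qed
qed

end

theorem theorem5p8:
  fixes smult :: "'k::comm_ring_1 \<Rightarrow> 'a::ring_1 \<Rightarrow> 'a" and bar :: "'a \<Rightarrow> 'a"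
  assumes "kalgebra smult" and "involution smult bar"
  shows "\<exists>\<Phi>. bij_betw \<Phi> (HO0 smult bar) (quot_set UNIV (HO_ideal bar)) \<and>
     (\<forall>X \<in> HO0 smult bar. \<forall>Y \<in> HO0 smult bar. \<Phi> (X + Y) = \<Phi> X + \<Phi> Y) \<and>
     (\<forall>c. \<forall>X \<in> HO0 smult bar.
        \<Phi> (coset_smult fsmult c X (HO0_rel smult bar)) = coset_smult smult c (\<Phi> X) (HO_ideal bar))"
proof -
  note kalg = assms(1) and inv = assms(2)
  let ?N = "HO0_rel smult bar" and ?I = "HO_ideal bar"
  let ?P = "PhiG smult bar"
  have sI: "subgrp ?I" by (rule I_subgrp[OF kalg inv])
  have sN: "subgrp ?N" by (rule N_subgrp[OF kalg inv])
  have Pc: "\<And>x. ?P (x +o ?N) = psi smult x +o ?I" by (rule Phi_coset[OF kalg inv])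
  have H: "HO0 smult bar = (\<lambda>x. x +o ?N) ` HO_chains" unfolding HO0_def quot_set_def ..
  have inj: "inj_on ?P (HO0 smult bar)"
  proof (rule inj_onI)
    fix X Y assume X: "X \<in> HO0 smult bar" and Y: "Y \<in> HO0 smult bar" and e: "?P X = ?P Y"
    obtain x where x: "x \<in> HO_chains" "X = x +o ?N" using X H by blast
    obtain y where y: "y \<in> HO_chains" "Y = y +o ?N" using Y H by blast
    have "psi smult x +o ?I = psi smult y +o ?I" using e x y Pc by simp
    then have d: "psi smult x - psi smult y \<in> ?I" using coset_eq[OF sI] by blast
    let ?a = "Poly_Mapping.single [psi smult x] (1::'k)" and ?b = "Poly_Mapping.single [psi smult y] (1::'k)"
      and ?c = "Poly_Mapping.single [psi smult x - psi smult y] (1::'k)"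
    have c: "?c \<in> ?N" by (rule N_I1[OF kalg inv d])
    have a: "x - ?a \<in> ?N" by (rule N_psi[OF kalg inv x(1)])
    have b: "y - ?b \<in> ?N" by (rule N_psi[OF kalg inv y(1)])
    have l: "?a - ?c - ?b \<in> ?N" using N_lin_add[OF kalg inv, of "psi smult x - psi smult y" "psi smult y"] by simp
    have "x - y \<in> ?N" unfolding g5[of x y ?a ?b ?c]
      using N_add[OF kalg inv] N_diff[OF kalg inv] a b c l by metis
    then show "X = Y" using x y coset_eq[OF sN] by blast
  qed
  have img: "?P ` HO0 smult bar = quot_set UNIV ?I"
  proof
    show "?P ` HO0 smult bar \<subseteq> quot_set UNIV ?I"
      unfolding H quot_set_def using Pc by auto
  next
    show "quot_set UNIV ?I \<subseteq> ?P ` HO0 smult bar"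
    proof
      fix Z assume "Z \<in> quot_set UNIV ?I"
      then obtain a where a: "Z = a +o ?I" unfolding quot_set_def by blast
      have ch: "Poly_Mapping.single [a] (1::'k) \<in> HO_chains" unfolding HO_chains_def by simp
      have "psi smult (Poly_Mapping.single [a] (1::'k)) = a"
        by (simp add: psi_single[OF kalg inv] sm_one[OF kalg inv])
      then have "Z = ?P (Poly_Mapping.single [a] 1 +o ?N)" using a Pc by simp
      moreover have "Poly_Mapping.single [a] 1 +o ?N \<in> HO0 smult bar" using ch H by blast
      ultimately show "Z \<in> ?P ` HO0 smult bar" by blast
    qed
  qed
  have add: "\<forall>X \<in> HO0 smult bar. \<forall>Y \<in> HO0 smult bar. ?P (X + Y) = ?P X + ?P Y"
  proof (intro ballI)
    fix X Y assume X: "X \<in> HO0 smult bar" and Y: "Y \<in> HO0 smult bar"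
    obtain x where x: "X = x +o ?N" using X H by blast
    obtain y where y: "Y = y +o ?N" using Y H by blast
    have "?P (X + Y) = psi smult (x + y) +o ?I" unfolding x y coset_add[OF sN] Pc ..
    also have "\<dots> = (psi smult x +o ?I) + (psi smult y +o ?I)"
      by (simp add: psi_add[OF kalg inv] coset_add[OF sI])
    also have "\<dots> = ?P X + ?P Y" unfolding x y Pc ..
    finally show "?P (X + Y) = ?P X + ?P Y" .
  qed
  have sm: "\<forall>c. \<forall>X \<in> HO0 smult bar.
        ?P (coset_smult fsmult c X ?N) = coset_smult smult c (?P X) ?I"
  proof (intro allI ballI)
    fix c X assume X: "X \<in> HO0 smult bar"
    obtain x where x: "X = x +o ?N" using X H by blast
    have "coset_smult fsmult c X ?N = fsmult c x +o ?N"
      unfolding x coset_smult_def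
      by (rule coset_lin[OF sN]) (simp_all add: fsmult_add N_fsmult[OF kalg inv])
    then have "?P (coset_smult fsmult c X ?N) = smult c (psi smult x) +o ?I"
      by (simp add: Pc psi_fsmult[OF kalg inv])
    also have "\<dots> = coset_smult smult c (?P X) ?I"
      unfolding x Pc coset_smult_def
      by (rule coset_lin[OF sI, symmetric]) (simp_all add: sm_add[OF kalg inv] I_sm[OF kalg inv])
    finally show "?P (coset_smult fsmult c X ?N) = coset_smult smult c (?P X) ?I" .
  qed
  show ?thesis using inj img add sm unfolding bij_betw_def by blast
qed

end
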